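(* Let $G$ be a connected simple graph with maximum degree at most $3$ and minimum degree at least $2$, in which no two adjacent vertices both have degree $3$. Let $M_1,M_2$ be disjoint matchings of $G$ such that $|M_1\cup M_2|$ is maximum over all pairs of disjoint matchings, and, subject to this, such that $G_{M_1,M_2}$ has the minimum number of connected components. Then there is no edge of $M_1\cup M_2$ joining a vertex of one component of $G_{M_1,M_2}$ that is a $P_3$ to a vertex of a different component of $G_{M_1,M_2}$ that is a $P_3$.
   Context: $G_{M_1,M_2}$ denotes the subgraph of $G$ induced by the edge set $E(G)\setminus(M_1\cup M_2)$. $P_k$ denotes a path on $k$ vertices. *)

theory Defs
  imports Main
begin

definition simple_graph :: "'a set \<Rightarrow> 'a set set \<Rightarrow> bool" where
  "simple_graph V E \<longleftrightarrow> finite V \<and>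
     (\<forall>e\<in>E. \<exists>u v. e = {u, v} \<and> u \<noteq> v \<and> u \<in> V \<and> v \<in> V)"

definition degree :: "'a set set \<Rightarrow> 'a \<Rightarrow> nat" where
  "degree E v = card {e \<in> E. v \<in> e}"

definition reach :: "'a set set \<Rightarrow> 'a \<Rightarrow> 'a \<Rightarrow> bool" where
  "reach F = (\<lambda>u v. {u, v} \<in> F)\<^sup>*\<^sup>*"

definition connected_graph :: "'a set \<Rightarrow> 'a set set \<Rightarrow> bool" where
  "connected_graph V E \<longleftrightarrow> V \<noteq> {} \<and> (\<forall>u\<in>V. \<forall>v\<in>V. reach E u v)"

definition matching :: "'a set set \<Rightarrow> 'a set set \<Rightarrow> bool" where
  "matching E M \<longleftrightarrow> M \<subseteq> E \<and> (\<forall>e1\<in>M. \<forall>e2\<in>M. e1 \<noteq> e2 \<longrightarrow> e1 \<inter> e2 = {})"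

text \<open>Connected components (as vertex sets) of the subgraph induced by the edge set F,
  whose vertex set is the set of endpoints of edges in F.\<close>
definition components :: "'a set set \<Rightarrow> 'a set set" where
  "components F = {C. \<exists>v\<in>\<Union>F. C = {w. reach F v w}}"

definition num_components :: "'a set set \<Rightarrow> nat" where
  "num_components F = card (components F)"

text \<open>G_{M1,M2}: the subgraph of G induced by E - (M1 \<union> M2), given by its edge set.\<close>
definition G_minus :: "'a set set \<Rightarrow> 'a set set \<Rightarrow> 'a set set \<Rightarrow> 'a set set" where
  "G_minus E M1 M2 = E - (M1 \<union> M2)"

definition is_P3_component :: "'a set set \<Rightarrow> 'a set \<Rightarrow> bool" where
  "is_P3_component F C \<longleftrightarrow> C \<in> components F \<and>
     (\<exists>a b c. a \<noteq> b \<and> b \<noteq> c \<and> a \<noteq> c \<and> C = {a, b, c} \<and>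
        {e \<in> F. e \<subseteq> C} = {{a, b}, {b, c}})"

definition disjoint_matchings :: "'a set set \<Rightarrow> 'a set set \<Rightarrow> 'a set set \<Rightarrow> bool" where
  "disjoint_matchings E M1 M2 \<longleftrightarrow> matching E M1 \<and> matching E M2 \<and> M1 \<inter> M2 = {}"

end

theory Submission
  imports Defs
begin

lemma finE: "simple_graph V E \<Longrightarrow> finite E"
proof -
  assume s: "simple_graph V E"
  have "E \<subseteq> Pow V" using s unfolding simple_graph_def by fastforce
  moreover have "finite (Pow V)" using s unfolding simple_graph_def by simp
  ultimately show ?thesis by (rule finite_subset)
qed

lemma inV: "simple_graph V E \<Longrightarrow> e \<in> E \<Longrightarrow> x \<in> e \<Longrightarrow> x \<in> V"
  unfolding simple_graph_def by fastforce

lemma edge_ne: "simple_graph V E \<Longrightarrow> {u, v} \<in> E \<Longrightarrow> u \<noteq> v"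
  unfolding simple_graph_def by (metis doubleton_eq_iff)

lemma deg3: assumes "simple_graph V E" "e1 \<in> E" "e2 \<in> E" "e3 \<in> E"
  "e1 \<noteq> e2" "e1 \<noteq> e3" "e2 \<noteq> e3" "x \<in> e1" "x \<in> e2" "x \<in> e3"
  shows "degree E x \<ge> 3"
proof -
  have "{e1, e2, e3} \<subseteq> {e \<in> E. x \<in> e}" using assms by auto
  moreover have "finite {e \<in> E. x \<in> e}" using finE[OF assms(1)] by simp
  ultimately have "card {e1, e2, e3} \<le> degree E x" unfolding degree_def by (rule card_mono[rotated])
  moreover have "card {e1, e2, e3} = 3" using assms by auto
  ultimately show ?thesis by simp
qed

lemma deg4: assumes "simple_graph V E" "e1 \<in> E" "e2 \<in> E" "e3 \<in> E" "e4 \<in> E"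
  "e1 \<noteq> e2" "e1 \<noteq> e3" "e2 \<noteq> e3" "e1 \<noteq> e4" "e2 \<noteq> e4" "e3 \<noteq> e4"
  "x \<in> e1" "x \<in> e2" "x \<in> e3" "x \<in> e4"
  shows "degree E x \<ge> 4"
proof -
  have "{e1, e2, e3, e4} \<subseteq> {e \<in> E. x \<in> e}" using assms by auto
  moreover have "finite {e \<in> E. x \<in> e}" using finE[OF assms(1)] by simp
  ultimately have "card {e1, e2, e3, e4} \<le> degree E x" unfolding degree_def by (rule card_mono[rotated])
  moreover have "card {e1, e2, e3, e4} = 4" using assms by auto
  ultimately show ?thesis by simp
qed

lemma augment:
  assumes sg: "simple_graph V E" and dm: "disjoint_matchings E M1 M2"
    and mx: "\<forall>N1 N2. disjoint_matchings E N1 N2 \<longrightarrow> card (N1 \<union> N2) \<le> card (M1 \<union> M2)"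
    and xy: "{x, y} \<in> E" "{x, y} \<notin> M1 \<union> M2"
    and nx: "\<forall>g\<in>M2. x \<notin> g" and ny: "\<forall>g\<in>M2. y \<notin> g"
  shows False
proof -
  have m1: "matching E M1" and m2: "matching E M2" and d: "M1 \<inter> M2 = {}"
    using dm unfolding disjoint_matchings_def by auto
  have "matching E (insert {x, y} M2)"
    unfolding matching_def
  proof (intro conjI ballI impI)
    show "insert {x, y} M2 \<subseteq> E" using m2 xy(1) unfolding matching_def by simp
  next
    fix e1 e2 assume e: "e1 \<in> insert {x, y} M2" "e2 \<in> insert {x, y} M2" "e1 \<noteq> e2"
    have dis: "g \<inter> {x, y} = {}" if "g \<in> M2" for g using nx ny that by auto
    show "e1 \<inter> e2 = {}"
    proof (cases "e1 = {x, y}")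
      case True
      then show ?thesis using e dis by (metis Int_commute insert_iff)
    next
      case False
      then have "e1 \<in> M2" using e by simp
      show ?thesis
      proof (cases "e2 = {x, y}")
        case True then show ?thesis using dis \<open>e1 \<in> M2\<close> by simp
      next
        case False then have "e2 \<in> M2" using e by simp
        then show ?thesis using m2 \<open>e1 \<in> M2\<close> e(3) unfolding matching_def by blast
      qed
    qed
  qed
  moreover have "M1 \<inter> insert {x, y} M2 = {}" using d xy(2) by simp
  ultimately have "disjoint_matchings E M1 (insert {x, y} M2)"
    using m1 unfolding disjoint_matchings_def by simp
  hence le: "card (M1 \<union> insert {x, y} M2) \<le> card (M1 \<union> M2)" using mx by blast
  have "M1 \<union> M2 \<subseteq> E" using m1 m2 unfolding matching_def by simp
  hence fin: "finite (M1 \<union> M2)" using finE[OF sg] by (rule finite_subset)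
  have "M1 \<union> insert {x, y} M2 = insert {x, y} (M1 \<union> M2)" by simp
  hence "card (M1 \<union> insert {x, y} M2) = Suc (card (M1 \<union> M2))" using fin xy(2) by simp
  thus False using le by simp
qed

lemma push:
  assumes sg: "simple_graph V E" and dm: "disjoint_matchings E M1 M2"
    and mx: "\<forall>N1 N2. disjoint_matchings E N1 N2 \<longrightarrow> card (N1 \<union> N2) \<le> card (M1 \<union> M2)"
    and d3: "\<forall>v\<in>V. degree E v \<le> 3"
    and adj: "\<forall>u v. {u, v} \<in> E \<longrightarrow> \<not> (degree E u = 3 \<and> degree E v = 3)"
    and xy: "{x, y} \<in> E" "{x, y} \<notin> M1 \<union> M2"
    and dy: "degree E y \<ge> 3" and ny: "\<forall>g\<in>M2. y \<notin> g"
    and ex: "ex \<in> M1" "x \<in> ex"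
  shows False
proof (cases "\<exists>g\<in>M2. x \<in> g")
  case True
  then obtain g where g: "g \<in> M2" "x \<in> g" by blast
  have M: "M1 \<subseteq> E" "M2 \<subseteq> E" "M1 \<inter> M2 = {}" using dm unfolding disjoint_matchings_def matching_def by auto
  have "degree E x \<ge> 3"
    apply (rule deg3[OF sg xy(1), of ex g]) using M ex g xy by auto
  moreover have "x \<in> V" "y \<in> V" using inV[OF sg xy(1)] by auto
  ultimately show False using d3 dy adj xy(1) by (metis le_antisym)
next
  case False
  then show False using augment[OF sg dm mx xy] ny by blast
qed

lemma comp_disj:
  assumes "C1 \<in> components F" "C2 \<in> components F" "C1 \<noteq> C2"
  shows "C1 \<inter> C2 = {}"
proof (rule ccontr)
  assume "C1 \<inter> C2 \<noteq> {}"
  then obtain w where w: "w \<in> C1" "w \<in> C2" by blast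
  obtain v1 where v1: "C1 = {w. reach F v1 w}" using assms(1) unfolding components_def by blast
  obtain v2 where v2: "C2 = {w. reach F v2 w}" using assms(2) unfolding components_def by blast
  have sy: "symp (\<lambda>u v. {u, v} \<in> F)" by (simp add: symp_def insert_commute)
  have sr: "symp (reach F)" unfolding reach_def using symp_rtranclp[OF sy] .
  have tr: "transp (reach F)" unfolding reach_def transp_def by (meson rtranclp_trans)
  have a1: "reach F v1 w" and a2: "reach F v2 w" using w v1 v2 by auto
  have a3: "reach F w v2" using sr a2 by (rule sympD)
  have a4: "reach F w v1" using sr a1 by (rule sympD)
  have "C1 \<subseteq> C2"
  proof
    fix z assume "z \<in> C1"
    hence "reach F v1 z" using v1 by simp
    hence "reach F w z" using a4 tr by (meson transpD)
    hence "reach F v2 z" using a2 tr by (meson transpD)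
    thus "z \<in> C2" using v2 by simp
  qed
  moreover have "C2 \<subseteq> C1"
  proof
    fix z assume "z \<in> C2"
    hence "reach F v2 z" using v2 by simp
    hence "reach F w z" using a3 tr by (meson transpD)
    hence "reach F v1 z" using a1 tr by (meson transpD)
    thus "z \<in> C1" using v1 by simp
  qed
  ultimately have "C1 = C2" by blast
  thus False using assms(3) by simp
qed

lemma key:
  assumes sg: "simple_graph V E" and dm: "disjoint_matchings E M1 M2"
    and mx: "\<forall>N1 N2. disjoint_matchings E N1 N2 \<longrightarrow> card (N1 \<union> N2) \<le> card (M1 \<union> M2)"
    and d3: "\<forall>v\<in>V. degree E v \<le> 3"
    and adj: "\<forall>u v. {u, v} \<in> E \<longrightarrow> \<not> (degree E u = 3 \<and> degree E v = 3)"
    and P: "is_P3_component (G_minus E M1 M2) C"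
    and uC: "u \<in> C" and e: "{u, v} \<in> M1" and vC: "v \<notin> C"
  shows "\<exists>w\<in>C. {u, w} \<in> G_minus E M1 M2 \<and> (\<forall>f\<in>M1. w \<notin> f)"
proof -
  obtain a b c where abc: "a \<noteq> b" "b \<noteq> c" "a \<noteq> c" "C = {a, b, c}"
    and ed: "{e \<in> G_minus E M1 M2. e \<subseteq> C} = {{a, b}, {b, c}}"
    using P unfolding is_P3_component_def by blast
  have ab: "{a, b} \<in> E" "{a, b} \<notin> M1 \<union> M2" using ed unfolding G_minus_def by blast+
  have bc: "{b, c} \<in> E" "{b, c} \<notin> M1 \<union> M2" using ed unfolding G_minus_def by blast+
  have M: "M1 \<subseteq> E" "M2 \<subseteq> E" "M1 \<inter> M2 = {}" using dm unfolding disjoint_matchings_def matching_def by auto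
  have eE: "{u, v} \<in> E" using e M by auto
  have bV: "b \<in> V" using inV[OF sg ab(1)] by auto
  have ne1: "{a, b} \<noteq> {b, c}" using abc by (metis doubleton_eq_iff)
  have mx': "\<forall>N1 N2. disjoint_matchings E N1 N2 \<longrightarrow> card (N1 \<union> N2) \<le> card (M1 \<union> M2)" using mx .
  have noM2b: "\<forall>g\<in>M2. b \<notin> g" if f: "f \<in> M1" "b \<in> f" for f
  proof (intro ballI notI)
    fix g assume g: "g \<in> M2" "b \<in> g"
    have "degree E b \<ge> 4"
      apply (rule deg4[OF sg ab(1) bc(1), of f g]) using M f g ab bc ne1 by auto
    thus False using d3 bV by auto
  qed
  have d3b: "degree E b \<ge> 3" if f: "f \<in> M1" "b \<in> f" for f
    apply (rule deg3[OF sg ab(1) bc(1), of f]) using M f ab bc ne1 by auto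
  show ?thesis
  proof (cases "u = b")
    case True
    have ne2: "{u, v} \<noteq> {a, b}" "{u, v} \<noteq> {b, c}" using ab bc e by auto
    have "\<forall>f\<in>M1. c \<notin> f"
    proof (intro ballI notI)
      fix f assume f: "f \<in> M1" "c \<in> f"
      have "\<forall>g\<in>M2. b \<notin> g" using noM2b[of "{u,v}"] e True by auto
      moreover have "degree E b \<ge> 3" using d3b[of "{u,v}"] e True by auto
      ultimately show False
        using push[OF sg dm mx d3 adj, of c b f] bc f by (auto simp: insert_commute)
    qed
    moreover have "{u, c} \<in> G_minus E M1 M2" using True bc unfolding G_minus_def by auto
    ultimately show ?thesis using abc by auto
  next
    case False
    have "\<forall>f\<in>M1. b \<notin> f"
    proof (intro ballI notI)
      fix f assume f: "f \<in> M1" "b \<in> f"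
      have "\<forall>g\<in>M2. b \<notin> g" using noM2b f by auto
      moreover have "degree E b \<ge> 3" using d3b f by auto
      ultimately show False
        using push[OF sg dm mx d3 adj, of u b "{u,v}"] e ab bc False uC abc
        by (auto simp: insert_commute)
    qed
    moreover have "{u, b} \<in> G_minus E M1 M2" using False uC abc ab bc unfolding G_minus_def
      by (auto simp: insert_commute)
    ultimately show ?thesis using abc by auto
  qed
qed

lemma main_case:
  assumes sg: "simple_graph V E" and dm: "disjoint_matchings E M1 M2"
    and mx: "\<forall>N1 N2. disjoint_matchings E N1 N2 \<longrightarrow> card (N1 \<union> N2) \<le> card (M1 \<union> M2)"
    and d3: "\<forall>v\<in>V. degree E v \<le> 3"
    and adj: "\<forall>u v. {u, v} \<in> E \<longrightarrow> \<not> (degree E u = 3 \<and> degree E v = 3)"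
    and e: "{u, v} \<in> M1"
    and P1: "is_P3_component (G_minus E M1 M2) C1" and P2: "is_P3_component (G_minus E M1 M2) C2"
    and ne: "C1 \<noteq> C2" and uC: "u \<in> C1" and vC: "v \<in> C2"
  shows False
proof -
  have c1: "C1 \<in> components (G_minus E M1 M2)" using P1 unfolding is_P3_component_def by simp
  have c2: "C2 \<in> components (G_minus E M1 M2)" using P2 unfolding is_P3_component_def by simp
  have disj: "C1 \<inter> C2 = {}" by (rule comp_disj[OF c1 c2 ne])
  have vC1: "v \<notin> C1" and uC2: "u \<notin> C2" using disj uC vC by auto
  obtain w where w: "w \<in> C1" "{u, w} \<in> G_minus E M1 M2" "\<forall>f\<in>M1. w \<notin> f"
    using key[OF sg dm mx d3 adj P1 uC e vC1] by blast
  have e': "{v, u} \<in> M1" using e by (simp add: insert_commute)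
  obtain w' where w': "w' \<in> C2" "{v, w'} \<in> G_minus E M1 M2" "\<forall>f\<in>M1. w' \<notin> f"
    using key[OF sg dm mx d3 adj P2 vC e' uC2] by blast
  have m1: "matching E M1" and m2: "matching E M2" and d: "M1 \<inter> M2 = {}"
    using dm unfolding disjoint_matchings_def by auto
  have H1: "{u, w} \<in> E" "{u, w} \<notin> M1 \<union> M2" using w(2) unfolding G_minus_def by auto
  have H2: "{v, w'} \<in> E" "{v, w'} \<notin> M1 \<union> M2" using w'(2) unfolding G_minus_def by auto
  have dd: "{u, w} \<inter> {v, w'} = {}" using disj uC vC w(1) w'(1) by blast
  have neq: "{u, w} \<noteq> {v, w'}" using dd by auto
  have mm1: "\<forall>a\<in>M1. \<forall>b\<in>M1. a \<noteq> b \<longrightarrow> a \<inter> b = {}" using m1 unfolding matching_def by simp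
  define N1 where "N1 = insert {u, w} (insert {v, w'} (M1 - {{u, v}}))"
  have oth: "f \<inter> {u, w} = {} \<and> f \<inter> {v, w'} = {}" if f: "f \<in> M1 - {{u, v}}" for f
  proof -
    have fM: "f \<in> M1" "f \<noteq> {u, v}" using f by auto
    have "f \<inter> {u, v} = {}" by (rule mm1[rule_format, OF fM(1) e fM(2)])
    thus ?thesis using w(3) w'(3) f by blast
  qed
  have "matching E N1"
    unfolding matching_def
  proof (intro conjI ballI impI)
    show "N1 \<subseteq> E" using m1 H1 H2 unfolding matching_def N1_def by auto
  next
    fix e1 e2 assume ee: "e1 \<in> N1" "e2 \<in> N1" "e1 \<noteq> e2"
    have mm: "f \<inter> g = {}" if "f \<in> M1 - {{u, v}}" "g \<in> M1 - {{u, v}}" "f \<noteq> g" for f g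
      using mm1 that by simp
    have dd': "{v, w'} \<inter> {u, w} = {}" using dd by blast
    have o1: "f \<inter> {u, w} = {}" "{u, w} \<inter> f = {}" "f \<inter> {v, w'} = {}" "{v, w'} \<inter> f = {}"
      if "f \<in> M1 - {{u, v}}" for f using oth[OF that] by blast+
    have "e1 = {u, w} \<or> e1 = {v, w'} \<or> e1 \<in> M1 - {{u, v}}" using ee(1) unfolding N1_def by blast
    moreover have "e2 = {u, w} \<or> e2 = {v, w'} \<or> e2 \<in> M1 - {{u, v}}" using ee(2) unfolding N1_def by blast
    ultimately show "e1 \<inter> e2 = {}"
      using mm[of e1 e2] o1[of e1] o1[of e2] dd dd' ee(3) by metis
  qed
  moreover have "N1 \<inter> M2 = {}" using d H1 H2 unfolding N1_def by auto
  ultimately have "disjoint_matchings E N1 M2" using m2 unfolding disjoint_matchings_def by simp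
  hence le: "card (N1 \<union> M2) \<le> card (M1 \<union> M2)" using mx by blast
  have "M1 \<union> M2 \<subseteq> E" using m1 m2 unfolding matching_def by simp
  hence fin: "finite (M1 \<union> M2)" using finE[OF sg] by (rule finite_subset)
  have eq: "N1 \<union> M2 = insert {u, w} (insert {v, w'} ((M1 \<union> M2) - {{u, v}}))"
    using e d unfolding N1_def by auto
  have "card (insert {u, w} (insert {v, w'} ((M1 \<union> M2) - {{u, v}})))
        = Suc (Suc (card ((M1 \<union> M2) - {{u, v}})))"
    using fin H1 H2 neq by simp
  moreover have "card ((M1 \<union> M2) - {{u, v}}) = card (M1 \<union> M2) - 1" using fin e by simp
  moreover have "card (M1 \<union> M2) \<ge> 1" using fin e
    by (metis One_nat_def Suc_leI UnI1 card_gt_0_iff empty_iff)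
  ultimately have "card (N1 \<union> M2) = Suc (card (M1 \<union> M2))" using eq by simp
  thus False using le by simp
qed

theorem lemma2:
  fixes V :: "'a set" and E M1 M2 :: "'a set set"
  assumes "simple_graph V E"
    and "connected_graph V E"
    and "\<forall>v\<in>V. degree E v \<le> 3"
    and "\<forall>v\<in>V. degree E v \<ge> 2"
    and "\<forall>u v. {u, v} \<in> E \<longrightarrow> \<not> (degree E u = 3 \<and> degree E v = 3)"
    and "disjoint_matchings E M1 M2"
    and "\<forall>N1 N2. disjoint_matchings E N1 N2 \<longrightarrow> card (N1 \<union> N2) \<le> card (M1 \<union> M2)"
    and "\<forall>N1 N2. disjoint_matchings E N1 N2 \<and> card (N1 \<union> N2) = card (M1 \<union> M2) \<longrightarrow>
           num_components (G_minus E M1 M2) \<le> num_components (G_minus E N1 N2)"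
  shows "\<not> (\<exists>u v C1 C2. {u, v} \<in> M1 \<union> M2 \<and>
            is_P3_component (G_minus E M1 M2) C1 \<and> is_P3_component (G_minus E M1 M2) C2 \<and>
            C1 \<noteq> C2 \<and> u \<in> C1 \<and> v \<in> C2)"
proof
  assume "\<exists>u v C1 C2. {u, v} \<in> M1 \<union> M2 \<and>
            is_P3_component (G_minus E M1 M2) C1 \<and> is_P3_component (G_minus E M1 M2) C2 \<and>
            C1 \<noteq> C2 \<and> u \<in> C1 \<and> v \<in> C2"
  then obtain u v C1 C2 where h: "{u, v} \<in> M1 \<union> M2"
    "is_P3_component (G_minus E M1 M2) C1" "is_P3_component (G_minus E M1 M2) C2"
    "C1 \<noteq> C2" "u \<in> C1" "v \<in> C2" by blast
  show False
  proof (cases "{u, v} \<in> M1")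
    case True
    show False using main_case[OF assms(1) assms(6) assms(7) assms(3) assms(5) True h(2-6)] .
  next
    case False
    hence e: "{u, v} \<in> M2" using h(1) by simp
    have dm': "disjoint_matchings E M2 M1" using assms(6) unfolding disjoint_matchings_def by auto
    have mx': "\<forall>N1 N2. disjoint_matchings E N1 N2 \<longrightarrow> card (N1 \<union> N2) \<le> card (M2 \<union> M1)"
      using assms(7) by (simp add: Un_commute)
    have G: "G_minus E M1 M2 = G_minus E M2 M1" unfolding G_minus_def by (simp add: Un_commute)
    show False using main_case[OF assms(1) dm' mx' assms(3) assms(5) e, of C1 C2] h(2-6) G by simp
  qed
qed

end
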